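(* Let $m\ge 1$, $n\ge 2$, $d=(n-1)m$, let $\mathcal{H}\in\operatorname{H}^m(\mathbb{C}^n)$ with associated vector $h=(h_0,\dots,h_d)$, and regard $h$ as the symmetric binary tensor in $\operatorname{S}^d(\mathbb{C}^2)$ represented by the binary form $h(x,y)=\sum_{j=0}^d\binom{d}{j}h_jx^jy^{d-j}$. Then $\operatorname{rank}_V(\mathcal{H})=\operatorname{rank}_S(h)$ and $\underline{\operatorname{rank}}_V(\mathcal{H})=\underline{\operatorname{rank}}_S(h)$.
   Context: A tensor $\mathcal{H}\in\operatorname{T}^m(\mathbb{C}^n)$ is Hankel if there is a vector $h=(h_0,\dots,h_{(n-1)m})$ (the associated vector) with $\mathcal{H}_{i_1\dots i_m}=h_{i_1+\cdots+i_m-m}$ for all $1\le i_1,\dots,i_m\le n$; $\operatorname{H}^m(\mathbb{C}^n)$ is the space of such tensors. The binary form $h(x,y)$ is identified with the symmetric tensor $T\in\operatorname{S}^d(\mathbb{C}^2)$ whose entry $T_{i_1\dots i_d}$ ($i_k\in\{1,2\}$) equals $h_j$ where $j$ is the number of indices equal to $1$. Symmetric rank: $\operatorname{rank}_S(\mathcal{A})=\min\{r:\mathcal{A}=\sum_{i=1}^r u_i^{\otimes \mathrm{ord}}\}$; symmetric border rank $\underline{\operatorname{rank}}_S(\mathcal{A})$ is the least $r$ such that $\mathcal{A}$ is a limit of tensors of the form $\sum_{i=1}^r u_i^{\otimes \mathrm{ord}}$. Vandermonde rank $\operatorname{rank}_V(\mathcal{H})$: least $r$ with $\mathcal{H}=\sum_{i=1}^r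 (a_i^{n-1},a_i^{n-2}b_i,\dots,b_i^{n-1})^{\otimes m}$, $a_i,b_i\in\mathbb{C}$. Vandermonde border rank $\underline{\operatorname{rank}}_V(\mathcal{H})$: least $r$ such that $\mathcal{H}$ is a limit of Hankel tensors of Vandermonde rank at most $r$. *)

theory Defs
  imports Complex_Main
begin

text \<open>Tensors of order k over C^N are represented as functions on index lists;
  only lists of length k with entries in {0..<N} (0-based indices) matter.\<close>

definition tensor_idx :: "nat \<Rightarrow> nat \<Rightarrow> nat list set" where
  "tensor_idx k N = {idx. length idx = k \<and> set idx \<subseteq> {..<N}}"

definition sym_decomp :: "nat \<Rightarrow> nat \<Rightarrow> nat \<Rightarrow> (nat list \<Rightarrow> complex) \<Rightarrow> bool" where
  "sym_decomp N k r T \<longleftrightarrow> (\<exists>u :: nat \<Rightarrow> nat \<Rightarrow> complex.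
      \<forall>idx \<in> tensor_idx k N. T idx = (\<Sum>i<r. prod_list (map (u i) idx)))"

definition sym_rank :: "nat \<Rightarrow> nat \<Rightarrow> (nat list \<Rightarrow> complex) \<Rightarrow> nat" where
  "sym_rank N k T = (LEAST r. sym_decomp N k r T)"

definition sym_border_rank :: "nat \<Rightarrow> nat \<Rightarrow> (nat list \<Rightarrow> complex) \<Rightarrow> nat" where
  "sym_border_rank N k T = (LEAST r. \<exists>X :: nat \<Rightarrow> nat list \<Rightarrow> complex.
      (\<forall>j. sym_decomp N k r (X j)) \<and>
      (\<forall>idx \<in> tensor_idx k N. (\<lambda>j. X j idx) \<longlonglongrightarrow> T idx))"

text \<open>T (order m over C^n) is a sum of r Vandermonde rank-one tensors
  (a^(n-1), a^(n-2) b, ..., b^(n-1))^{\<otimes>m}; 0-based entry k is a^(n-1-k) b^k.\<close>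
definition vand_decomp :: "nat \<Rightarrow> nat \<Rightarrow> nat \<Rightarrow> (nat list \<Rightarrow> complex) \<Rightarrow> bool" where
  "vand_decomp n m r T \<longleftrightarrow> (\<exists>a b :: nat \<Rightarrow> complex.
      \<forall>idx \<in> tensor_idx m n. T idx =
        (\<Sum>i<r. prod_list (map (\<lambda>k. a i ^ (n - 1 - k) * b i ^ k) idx)))"

definition vand_rank :: "nat \<Rightarrow> nat \<Rightarrow> (nat list \<Rightarrow> complex) \<Rightarrow> nat" where
  "vand_rank n m T = (LEAST r. vand_decomp n m r T)"

text \<open>Limits of Hankel tensors of Vandermonde rank at most r (such sums are
  automatically Hankel). Convergence is entrywise, equivalent to norm convergence
  in the finite-dimensional tensor space. Rank at most r = decomposition with
  exactly r terms, since zero terms (a = b = 0) are allowed.\<close>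
definition vand_border_rank :: "nat \<Rightarrow> nat \<Rightarrow> (nat list \<Rightarrow> complex) \<Rightarrow> nat" where
  "vand_border_rank n m T = (LEAST r. \<exists>X :: nat \<Rightarrow> nat list \<Rightarrow> complex.
      (\<forall>j. vand_decomp n m r (X j)) \<and>
      (\<forall>idx \<in> tensor_idx m n. (\<lambda>j. X j idx) \<longlonglongrightarrow> T idx))"

text \<open>Hankel tensor in H^m(C^n) with associated vector h (0-based indices:
  entry at (i_1,...,i_m) is h (i_1+...+i_m)).\<close>
definition is_hankel_with :: "nat \<Rightarrow> nat \<Rightarrow> (nat list \<Rightarrow> complex) \<Rightarrow> (nat \<Rightarrow> complex) \<Rightarrow> bool" where
  "is_hankel_with n m H h \<longleftrightarrow> (\<forall>idx \<in> tensor_idx m n. H idx = h (sum_list idx))"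

text \<open>The symmetric binary tensor in S^d(C^2) of h: entry = h_j where j is the
  number of indices equal to the first coordinate (0-based index 0).\<close>
definition binary_tensor :: "(nat \<Rightarrow> complex) \<Rightarrow> nat list \<Rightarrow> complex" where
  "binary_tensor h idx = h (count_list idx 0)"

end

theory Submission
  imports Defs
begin

lemma sum_bound: "set idx \<subseteq> {..<n} \<Longrightarrow> sum_list idx \<le> (n - 1) * length idx"
proof (induction idx)
  case (Cons k idx) then show ?case by force
qed simp

lemma prod_vand:
  fixes x y :: complex
  shows "set idx \<subseteq> {..<n} \<Longrightarrow> prod_list (map (\<lambda>k. x ^ (n - 1 - k) * y ^ k) idx)
     = x ^ ((n - 1) * length idx - sum_list idx) * y ^ (sum_list idx)"
proof (induction idx)
  case (Cons k idx)
  have k: "k \<le> n - 1" using Cons.prems by auto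
  have S: "sum_list idx \<le> (n - 1) * length idx" using Cons.prems sum_bound by auto
  have e: "(n - 1) * length (k # idx) - sum_list (k # idx) = (n - 1 - k) + ((n - 1) * length idx - sum_list idx)"
    using k S by simp
  have "prod_list (map (\<lambda>k. x ^ (n - 1 - k) * y ^ k) (k # idx))
     = (x ^ (n - 1 - k) * y ^ k) * (x ^ ((n - 1) * length idx - sum_list idx) * y ^ (sum_list idx))"
    using Cons by simp
  also have "\<dots> = x ^ ((n - 1 - k) + ((n - 1) * length idx - sum_list idx)) * y ^ (k + sum_list idx)"
    by (simp add: power_add mult_ac)
  finally show ?case by (subst e) simp
qed simp

lemma count_le: "count_list xs x \<le> length xs"
  by (induction xs) auto

lemma prod_bin:
  fixes idx :: "nat list" and u :: "nat \<Rightarrow> complex"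
  shows "set idx \<subseteq> {..<2} \<Longrightarrow> prod_list (map u idx) = u 0 ^ count_list idx 0 * u 1 ^ (length idx - count_list idx 0)"
proof (induction idx)
  case (Cons k idx)
  have c: "count_list idx 0 \<le> length idx" by (rule count_le)
  show ?case
  proof (cases "k = 0")
    case True then show ?thesis using Cons by (simp add: mult.assoc)
  next
    case False then have "k = 1" using Cons.prems by auto
    then show ?thesis using Cons c by (simp add: Suc_diff_le mult_ac)
  qed
qed simp

lemma exists_idx: "n \<ge> 1 \<Longrightarrow> s \<le> (n - 1) * m \<Longrightarrow> \<exists>idx \<in> tensor_idx m n. sum_list idx = s"
proof (induction m arbitrary: s)
  case 0 then show ?case by (auto simp: tensor_idx_def intro: bexI[of _ "[]"])
next
  case (Suc m)
  define k where "k = min s (n - 1)"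
  have "s - k \<le> (n - 1) * m" using Suc.prems by (auto simp: k_def)
  then obtain idx where i: "idx \<in> tensor_idx m n" "sum_list idx = s - k" using Suc.IH Suc.prems by blast
  have "k < n" using Suc.prems by (auto simp: k_def)
  then have "k # idx \<in> tensor_idx (Suc m) n" using i by (auto simp: tensor_idx_def)
  moreover have "sum_list (k # idx) = s" using i by (auto simp: k_def)
  ultimately show ?case by blast
qed


lemma rep_idx: "s \<le> d \<Longrightarrow> replicate s 0 @ replicate (d - s) 1 \<in> tensor_idx d 2
   \<and> count_list (replicate s 0 @ replicate (d - s) (1::nat)) 0 = s"
proof -
  have "count_list (replicate k (x::nat)) y = (if x = y then k else 0)" for k x y
    by (induction k) auto
  then show "s \<le> d \<Longrightarrow> ?thesis" by (auto simp: tensor_idx_def)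
qed

definition vdecr :: "nat \<Rightarrow> nat \<Rightarrow> (nat \<Rightarrow> complex) \<Rightarrow> bool" where
  "vdecr d r g \<longleftrightarrow> (\<exists>a b :: nat \<Rightarrow> complex. \<forall>s\<le>d. g s = (\<Sum>i<r. a i ^ (d - s) * b i ^ s))"

lemma vand_on_idx:
  assumes "idx \<in> tensor_idx m n"
  shows "(\<Sum>i<r. prod_list (map (\<lambda>k. a i ^ (n - 1 - k) * b i ^ k) idx))
     = (\<Sum>i<r. a i ^ ((n - 1) * m - sum_list idx) * (b i :: complex) ^ sum_list idx)"
  using assms prod_vand[of idx n] by (auto simp: tensor_idx_def)

lemma sum_le_d: "idx \<in> tensor_idx m n \<Longrightarrow> sum_list idx \<le> (n - 1) * m"
  using sum_bound[of idx n] by (auto simp: tensor_idx_def)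

lemma bin_on_idx:
  assumes "idx \<in> tensor_idx d 2"
  shows "(\<Sum>i<r. prod_list (map (u i) idx))
     = (\<Sum>i<r. u i 0 ^ count_list idx 0 * (u i 1 :: complex) ^ (d - count_list idx 0))"
  using assms prod_bin[of idx] by (auto simp: tensor_idx_def)

lemma cnt_le_d: "idx \<in> tensor_idx d 2 \<Longrightarrow> count_list idx 0 \<le> d"
  using count_le[of idx 0] by (auto simp: tensor_idx_def)

lemma vand_iff:
  assumes n: "n \<ge> 1" and hk: "is_hankel_with n m T g"
  shows "vand_decomp n m r T \<longleftrightarrow> vdecr ((n - 1) * m) r g"
proof
  assume "vand_decomp n m r T"
  then obtain a b where ab: "\<forall>idx \<in> tensor_idx m n. T idx =
        (\<Sum>i<r. prod_list (map (\<lambda>k. a i ^ (n - 1 - k) * b i ^ k) idx))"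
    unfolding vand_decomp_def by blast
  have "g s = (\<Sum>i<r. a i ^ ((n - 1) * m - s) * b i ^ s)" if sd: "s \<le> (n - 1) * m" for s
  proof -
    obtain idx where i: "idx \<in> tensor_idx m n" "sum_list idx = s" using exists_idx[OF n sd] by blast
    have "g s = T idx" using hk i by (auto simp: is_hankel_with_def)
    also have "\<dots> = (\<Sum>i<r. prod_list (map (\<lambda>k. a i ^ (n - 1 - k) * b i ^ k) idx))"
      using ab i(1) by blast
    also have "\<dots> = (\<Sum>i<r. a i ^ ((n - 1) * m - s) * b i ^ s)"
      using vand_on_idx[OF i(1)] i(2) by simp
    finally show ?thesis .
  qed
  then show "vdecr ((n - 1) * m) r g" unfolding vdecr_def by blast
next
  assume "vdecr ((n - 1) * m) r g"
  then obtain a b where ab: "\<forall>s\<le>(n - 1) * m. g s = (\<Sum>i<r. a i ^ ((n - 1) * m - s) * b i ^ s)"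
    unfolding vdecr_def by blast
  have "\<forall>idx \<in> tensor_idx m n. T idx =
        (\<Sum>i<r. prod_list (map (\<lambda>k. a i ^ (n - 1 - k) * b i ^ k) idx))"
  proof
    fix idx assume i: "idx \<in> tensor_idx m n"
    have "T idx = g (sum_list idx)" using hk i by (auto simp: is_hankel_with_def)
    also have "\<dots> = (\<Sum>i<r. a i ^ ((n - 1) * m - sum_list idx) * b i ^ sum_list idx)"
      using ab sum_le_d[OF i] by blast
    also have "\<dots> = (\<Sum>i<r. prod_list (map (\<lambda>k. a i ^ (n - 1 - k) * b i ^ k) idx))"
      by (rule vand_on_idx[OF i, symmetric])
    finally show "T idx = (\<Sum>i<r. prod_list (map (\<lambda>k. a i ^ (n - 1 - k) * b i ^ k) idx))" .
  qed
  then show "vand_decomp n m r T" unfolding vand_decomp_def by blast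
qed

lemma sym_iff: "sym_decomp 2 d r (binary_tensor g) \<longleftrightarrow> vdecr d r g"
proof
  assume "sym_decomp 2 d r (binary_tensor g)"
  then obtain u where u: "\<forall>idx \<in> tensor_idx d 2. binary_tensor g idx = (\<Sum>i<r. prod_list (map (u i) idx))"
    unfolding sym_decomp_def by blast
  have "g s = (\<Sum>i<r. u i 1 ^ (d - s) * u i 0 ^ s)" if "s \<le> d" for s
  proof -
    let ?idx = "replicate s 0 @ replicate (d - s) (1::nat)"
    have i: "?idx \<in> tensor_idx d 2" "count_list ?idx 0 = s" using rep_idx[OF that] by auto
    show ?thesis using u[rule_format, OF i(1)] bin_on_idx[OF i(1)] i(2)
      by (simp add: binary_tensor_def mult.commute)
  qed
  then show "vdecr d r g" unfolding vdecr_def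
    by (intro exI[of _ "\<lambda>i. u i 1"] exI[of _ "\<lambda>i. u i 0"]) simp
next
  assume "vdecr d r g"
  then obtain a b where ab: "\<forall>s\<le>d. g s = (\<Sum>i<r. a i ^ (d - s) * b i ^ s)"
    unfolding vdecr_def by blast
  define u :: "nat \<Rightarrow> nat \<Rightarrow> complex" where "u = (\<lambda>i k. if k = 0 then b i else a i)"
  have "\<forall>idx \<in> tensor_idx d 2. binary_tensor g idx = (\<Sum>i<r. prod_list (map (u i) idx))"
  proof
    fix idx assume i: "idx \<in> tensor_idx d 2"
    have "binary_tensor g idx = (\<Sum>i<r. a i ^ (d - count_list idx 0) * b i ^ count_list idx 0)"
      using ab cnt_le_d[OF i] by (simp add: binary_tensor_def)
    also have "\<dots> = (\<Sum>i<r. prod_list (map (u i) idx))"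
      using bin_on_idx[OF i, where u=u and r=r] by (simp add: u_def mult.commute)
    finally show "binary_tensor g idx = (\<Sum>i<r. prod_list (map (u i) idx))" .
  qed
  then show "sym_decomp 2 d r (binary_tensor g)" unfolding sym_decomp_def by blast
qed


lemma choice_ex: "\<forall>j. \<exists>u. P j u \<Longrightarrow> (\<And>U. \<forall>j. P j (U j) \<Longrightarrow> thesis) \<Longrightarrow> thesis"
  by (metis choice)
lemma choice2_ex: "\<forall>j. \<exists>a b. P j a b \<Longrightarrow> (\<And>A B. \<forall>j. P j (A j) (B j) \<Longrightarrow> thesis) \<Longrightarrow> thesis"
  by metis

definition bvdec :: "nat \<Rightarrow> nat \<Rightarrow> (nat \<Rightarrow> complex) \<Rightarrow> bool" where
  "bvdec d r g \<longleftrightarrow> (\<exists>a b :: nat \<Rightarrow> nat \<Rightarrow> complex. \<forall>s\<le>d.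
     (\<lambda>j. \<Sum>i<r. a j i ^ (d - s) * b j i ^ s) \<longlonglongrightarrow> g s)"

lemma vand_border_iff:
  assumes n: "n \<ge> 1" and hk: "is_hankel_with n m T g"
  shows "(\<exists>X :: nat \<Rightarrow> nat list \<Rightarrow> complex.
      (\<forall>j. vand_decomp n m r (X j)) \<and>
      (\<forall>idx \<in> tensor_idx m n. (\<lambda>j. X j idx) \<longlonglongrightarrow> T idx)) \<longleftrightarrow> bvdec ((n - 1) * m) r g"
proof
  assume "\<exists>X :: nat \<Rightarrow> nat list \<Rightarrow> complex.
      (\<forall>j. vand_decomp n m r (X j)) \<and>
      (\<forall>idx \<in> tensor_idx m n. (\<lambda>j. X j idx) \<longlonglongrightarrow> T idx)"
  then obtain X :: "nat \<Rightarrow> nat list \<Rightarrow> complex" where X1: "\<forall>j. vand_decomp n m r (X j)"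
    and X2: "\<forall>idx \<in> tensor_idx m n. (\<lambda>j. X j idx) \<longlonglongrightarrow> T idx" by blast
  from X1 have "\<forall>j. \<exists>a b :: nat \<Rightarrow> complex. \<forall>idx \<in> tensor_idx m n. X j idx =
        (\<Sum>i<r. prod_list (map (\<lambda>k. a i ^ (n - 1 - k) * b i ^ k) idx))"
    unfolding vand_decomp_def by blast
  then obtain A B where AB: "\<forall>j. \<forall>idx \<in> tensor_idx m n. X j idx =
        (\<Sum>i<r. prod_list (map (\<lambda>k. A j i ^ (n - 1 - k) * B j i ^ k) idx))"
    by (rule choice2_ex)
  have "(\<lambda>j. \<Sum>i<r. A j i ^ ((n - 1) * m - s) * B j i ^ s) \<longlonglongrightarrow> g s"
    if sd: "s \<le> (n - 1) * m" for s
  proof -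
    obtain idx where i: "idx \<in> tensor_idx m n" "sum_list idx = s" using exists_idx[OF n sd] by blast
    have "(\<lambda>j. X j idx) = (\<lambda>j. \<Sum>i<r. A j i ^ ((n - 1) * m - s) * B j i ^ s)"
    proof (rule ext)
      fix j show "X j idx = (\<Sum>i<r. A j i ^ ((n - 1) * m - s) * B j i ^ s)"
        using AB i vand_on_idx[OF i(1), where a="A j" and b="B j" and r=r] by auto
    qed
    moreover have "T idx = g s" using hk i by (auto simp: is_hankel_with_def)
    moreover have "(\<lambda>j. X j idx) \<longlonglongrightarrow> T idx" using X2 i(1) by blast
    ultimately show ?thesis by simp
  qed
  then show "bvdec ((n - 1) * m) r g" unfolding bvdec_def by blast
next
  assume "bvdec ((n - 1) * m) r g"
  then obtain a b :: "nat \<Rightarrow> nat \<Rightarrow> complex" where ab: "\<forall>s\<le>(n - 1) * m.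
     (\<lambda>j. \<Sum>i<r. a j i ^ ((n - 1) * m - s) * b j i ^ s) \<longlonglongrightarrow> g s"
    unfolding bvdec_def by blast
  define X where "X = (\<lambda>j idx. (\<Sum>i<r. prod_list (map (\<lambda>k. a j i ^ (n - 1 - k) * b j i ^ k) idx)))"
  have "vand_decomp n m r (X j)" for j unfolding vand_decomp_def X_def by blast
  moreover have "(\<lambda>j. X j idx) \<longlonglongrightarrow> T idx" if i: "idx \<in> tensor_idx m n" for idx
  proof -
    have "(\<lambda>j. X j idx) = (\<lambda>j. \<Sum>i<r. a j i ^ ((n - 1) * m - sum_list idx) * b j i ^ sum_list idx)"
    proof (rule ext)
      fix j show "X j idx = (\<Sum>i<r. a j i ^ ((n - 1) * m - sum_list idx) * b j i ^ sum_list idx)"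
        unfolding X_def by (rule vand_on_idx[OF i])
    qed
    moreover have "T idx = g (sum_list idx)" using hk i by (auto simp: is_hankel_with_def)
    ultimately show ?thesis using ab sum_le_d[OF i] by simp
  qed
  ultimately show "\<exists>X :: nat \<Rightarrow> nat list \<Rightarrow> complex.
      (\<forall>j. vand_decomp n m r (X j)) \<and>
      (\<forall>idx \<in> tensor_idx m n. (\<lambda>j. X j idx) \<longlonglongrightarrow> T idx)" by blast
qed

lemma sym_border_iff:
  shows "(\<exists>X :: nat \<Rightarrow> nat list \<Rightarrow> complex.
      (\<forall>j. sym_decomp 2 d r (X j)) \<and>
      (\<forall>idx \<in> tensor_idx d 2. (\<lambda>j. X j idx) \<longlonglongrightarrow> binary_tensor g idx)) \<longleftrightarrow> bvdec d r g"
proof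
  assume "\<exists>X :: nat \<Rightarrow> nat list \<Rightarrow> complex.
      (\<forall>j. sym_decomp 2 d r (X j)) \<and>
      (\<forall>idx \<in> tensor_idx d 2. (\<lambda>j. X j idx) \<longlonglongrightarrow> binary_tensor g idx)"
  then obtain X :: "nat \<Rightarrow> nat list \<Rightarrow> complex" where X1: "\<forall>j. sym_decomp 2 d r (X j)"
    and X2: "\<forall>idx \<in> tensor_idx d 2. (\<lambda>j. X j idx) \<longlonglongrightarrow> binary_tensor g idx" by blast
  from X1 have "\<forall>j. \<exists>u :: nat \<Rightarrow> nat \<Rightarrow> complex. \<forall>idx \<in> tensor_idx d 2. X j idx =
        (\<Sum>i<r. prod_list (map (u i) idx))"
    unfolding sym_decomp_def by blast
  then obtain U where U: "\<forall>j. \<forall>idx \<in> tensor_idx d 2. X j idx =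
        (\<Sum>i<r. prod_list (map (U j i) idx))"
    by (rule choice_ex)
  have "(\<lambda>j. \<Sum>i<r. U j i 1 ^ (d - s) * U j i 0 ^ s) \<longlonglongrightarrow> g s"
    if sd: "s \<le> d" for s
  proof -
    let ?idx = "replicate s 0 @ replicate (d - s) (1::nat)"
    have i: "?idx \<in> tensor_idx d 2" "count_list ?idx 0 = s" using rep_idx[OF sd] by auto
    have "(\<lambda>j. X j ?idx) = (\<lambda>j. \<Sum>i<r. U j i 1 ^ (d - s) * U j i 0 ^ s)"
      using U i bin_on_idx[OF i(1)] by (auto simp: mult.commute)
    moreover have "binary_tensor g ?idx = g s" using i by (simp add: binary_tensor_def)
    moreover have "(\<lambda>j. X j ?idx) \<longlonglongrightarrow> binary_tensor g ?idx" using X2 i(1) by blast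
    ultimately show ?thesis by simp
  qed
  then show "bvdec d r g" unfolding bvdec_def
    by (intro exI[of _ "\<lambda>j i. U j i 1"] exI[of _ "\<lambda>j i. U j i 0"]) simp
next
  assume "bvdec d r g"
  then obtain a b :: "nat \<Rightarrow> nat \<Rightarrow> complex" where ab: "\<forall>s\<le>d.
     (\<lambda>j. \<Sum>i<r. a j i ^ (d - s) * b j i ^ s) \<longlonglongrightarrow> g s"
    unfolding bvdec_def by blast
  define U :: "nat \<Rightarrow> nat \<Rightarrow> nat \<Rightarrow> complex" where "U = (\<lambda>j i k. if k = 0 then b j i else a j i)"
  define X where "X = (\<lambda>j idx. (\<Sum>i<r. prod_list (map (U j i) idx)))"
  have "sym_decomp 2 d r (X j)" for j unfolding sym_decomp_def X_def by blast
  moreover have "(\<lambda>j. X j idx) \<longlonglongrightarrow> binary_tensor g idx" if i: "idx \<in> tensor_idx d 2" for idx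
  proof -
    have "(\<lambda>j. X j idx) = (\<lambda>j. \<Sum>i<r. a j i ^ (d - count_list idx 0) * b j i ^ count_list idx 0)"
    proof (rule ext)
      fix j show "X j idx = (\<Sum>i<r. a j i ^ (d - count_list idx 0) * b j i ^ count_list idx 0)"
        unfolding X_def using bin_on_idx[OF i, where u="U j" and r=r] by (simp add: U_def mult.commute)
    qed
    then show ?thesis using ab cnt_le_d[OF i] by (simp add: binary_tensor_def)
  qed
  ultimately show "\<exists>X :: nat \<Rightarrow> nat list \<Rightarrow> complex.
      (\<forall>j. sym_decomp 2 d r (X j)) \<and>
      (\<forall>idx \<in> tensor_idx d 2. (\<lambda>j. X j idx) \<longlonglongrightarrow> binary_tensor g idx)" by blast
qed

theorem lemma3p2:
  fixes m n :: nat and H :: "nat list \<Rightarrow> complex" and h :: "nat \<Rightarrow> complex"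
  assumes "m \<ge> 1" and "n \<ge> 2"
    and "is_hankel_with n m H h"
  shows "vand_rank n m H = sym_rank 2 ((n - 1) * m) (binary_tensor h)
       \<and> vand_border_rank n m H = sym_border_rank 2 ((n - 1) * m) (binary_tensor h)"
proof
  have n: "n \<ge> 1" using assms by simp
  show "vand_rank n m H = sym_rank 2 ((n - 1) * m) (binary_tensor h)"
    unfolding vand_rank_def sym_rank_def
    using vand_iff[OF n assms(3)] sym_iff by simp
  show "vand_border_rank n m H = sym_border_rank 2 ((n - 1) * m) (binary_tensor h)"
    unfolding vand_border_rank_def sym_border_rank_def
    using vand_border_iff[OF n assms(3)] sym_border_iff by simp
qed

end
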